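(* For $p\in\mathbb{R}$, the function $h_p(x)=(1-x)^pK(x)$ is log-concave on $(0,1)$ if and only if $p\ge 7/32$, and log-convex on $(0,1)$ if and only if $p\le 0$.
   Context: $K(x)={\cal K}(\sqrt x)=\frac\pi2\,{}_2F_1(1/2,1/2;1;x)$ for $x\in[0,1)$, where ${\cal K}(r)=\int_0^{\pi/2}(1-r^2\sin^2t)^{-1/2}dt$ is the complete elliptic integral of the first kind. *)

theory Defs
  imports "HOL-Analysis.Analysis"
begin

definition ellK :: "real \<Rightarrow> real" where
  "ellK r = integral {0..pi/2} (\<lambda>t. 1 / sqrt (1 - r\<^sup>2 * (sin t)\<^sup>2))"

definition K :: "real \<Rightarrow> real" where
  "K x = ellK (sqrt x)"

definition h :: "real \<Rightarrow> real \<Rightarrow> real" where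
  "h p x = (1 - x) powr p * K x"

definition log_concave_on :: "real set \<Rightarrow> (real \<Rightarrow> real) \<Rightarrow> bool" where
  "log_concave_on S f \<longleftrightarrow> (\<forall>x\<in>S. f x > 0) \<and> concave_on S (\<lambda>x. ln (f x))"

definition log_convex_on :: "real set \<Rightarrow> (real \<Rightarrow> real) \<Rightarrow> bool" where
  "log_convex_on S f \<longleftrightarrow> (\<forall>x\<in>S. f x > 0) \<and> convex_on S (\<lambda>x. ln (f x))"

end

theory Submission
  imports Defs
begin



lemma convex_iff_f2:
  fixes f f' f'' :: "real \<Rightarrow> real"
  assumes d1: "\<And>x. x \<in> {a<..<b} \<Longrightarrow> (f has_real_derivative f' x) (at x)"
    and d2: "\<And>x. x \<in> {a<..<b} \<Longrightarrow> (f' has_real_derivative f'' x) (at x)"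
  shows "convex_on {a<..<b} f \<longleftrightarrow> (\<forall>x\<in>{a<..<b}. f'' x \<ge> 0)"
proof
  assume cv: "convex_on {a<..<b} f"
  have tan: "f y - f x \<ge> f' x * (y - x)" if "x \<in> {a<..<b}" "y \<in> {a<..<b}" for x y
    apply (rule convex_on_imp_above_tangent[OF cv])
    using that by (auto simp: interior_open intro!: has_field_derivative_at_within d1)
  show "\<forall>x\<in>{a<..<b}. f'' x \<ge> 0"
  proof (rule ccontr)
    assume "\<not> (\<forall>x\<in>{a<..<b}. f'' x \<ge> 0)"
    then obtain x where x: "x \<in> {a<..<b}" "f'' x < 0" by auto
    obtain d where d: "d > 0" "\<And>h. h > 0 \<Longrightarrow> h < d \<Longrightarrow> f' x > f' (x + h)"
      using DERIV_neg_dec_right[OF d2[OF x(1)] x(2)] by blast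
    define h where "h = min (d/2) ((b - x)/2)"
    have h: "h > 0" "h < d" "x + h \<in> {a<..<b}" using x d by (auto simp: h_def min_def field_simps)
    have "f' x > f' (x + h)" using d h by auto
    moreover have "f (x+h) - f x \<ge> f' x * h" using tan[OF x(1) h(3)] by simp
    moreover have "f x - f (x+h) \<ge> f' (x+h) * (-h)" using tan[OF h(3) x(1)] by simp
    moreover have "(f' x - f' (x+h)) * h > 0" using calculation(1) h(1) by simp
    ultimately show False by (simp add: algebra_simps)
  qed
next
  assume "\<forall>x\<in>{a<..<b}. f'' x \<ge> 0"
  then show "convex_on {a<..<b} f"
    by (intro f''_ge0_imp_convex[of _ _ f' f'']) (auto intro: d1 d2)
qed

lemma concave_iff_f2:
  fixes f f' f'' :: "real \<Rightarrow> real"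
  assumes d1: "\<And>x. x \<in> {a<..<b} \<Longrightarrow> (f has_real_derivative f' x) (at x)"
    and d2: "\<And>x. x \<in> {a<..<b} \<Longrightarrow> (f' has_real_derivative f'' x) (at x)"
  shows "concave_on {a<..<b} f \<longleftrightarrow> (\<forall>x\<in>{a<..<b}. f'' x \<le> 0)"
proof -
  have "concave_on {a<..<b} f \<longleftrightarrow> (\<forall>x\<in>{a<..<b}. - f'' x \<ge> 0)"
    unfolding concave_on_def
    by (rule convex_iff_f2) (auto intro!: derivative_eq_intros d1 d2)
  then show ?thesis by auto
qed




definition w :: "real \<Rightarrow> real \<Rightarrow> real" where "w x t = 1 - x * (sin t)^2"
definition F :: "nat \<Rightarrow> nat \<Rightarrow> real \<Rightarrow> real \<Rightarrow> real" where
  "F j k x t = ((sin t)^2)^k / sqrt (w x t) ^ (2*j+1)"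
definition G :: "nat \<Rightarrow> nat \<Rightarrow> real \<Rightarrow> real" where
  "G j k x = integral {0..pi/2} (F j k x)"

lemma w_pos: "x < 1 \<Longrightarrow> 0 < w x t"
proof -
  assume x: "x < 1"
  have s: "(sin t)^2 \<le> 1" "0 \<le> (sin t)^2" by (auto simp: abs_square_le_1)
  show ?thesis
  proof (cases "x \<ge> 0")
    case True
    then have "x * (sin t)^2 \<le> x" using s mult_left_le by blast
    then show ?thesis using x by (simp add: w_def)
  next
    case False
    then have "x * (sin t)^2 \<le> 0" using s by (simp add: mult_nonpos_nonneg)
    then show ?thesis by (simp add: w_def)
  qed
qed

lemma F_cont2: "continuous_on ({..<1} \<times> UNIV) (\<lambda>z. F j k (fst z) (snd z))"
  unfolding F_def w_def
  apply (intro continuous_intros)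
  using w_pos unfolding w_def by (auto; metis less_irrefl)

lemma F_cont: "x < 1 \<Longrightarrow> continuous_on S (F j k x)"
  unfolding F_def w_def
  apply (intro continuous_intros)
  using w_pos unfolding w_def by (auto; metis less_irrefl)

lemma F_has_integral: "x < 1 \<Longrightarrow> (F j k x has_integral G j k x) {0..pi/2}"
  unfolding G_def using F_cont integrable_continuous_interval has_integral_integral by blast

lemma F_deriv_alg:
  fixes r s :: real assumes r: "r > 0"
  shows "(0 * r ^ (2 * j + 1) - s ^ k * (real (2 * j + 1) * (inverse r / 2 * - s * r ^ (2 * j + 1 - Suc 0)))) /
     (r ^ (2 * j + 1) * r ^ (2 * j + 1)) = (2 * real j + 1) / 2 * (s ^ Suc k / r ^ (2 * Suc j + 1))"
proof -
  have e1: "r ^ (2 * j + 1) = r^(2*j) * r" by simp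
  have e2: "r ^ (2 * Suc j + 1) = r^(2*j) * r^3"
  proof -
    have "2 * Suc j + 1 = 2*j + 3" by simp
    then show ?thesis by (simp only: power_add)
  qed
  have e3: "2 * j + 1 - Suc 0 = 2*j" by simp
  have "r^(2*j) > 0" using r by simp
  then show ?thesis using r unfolding e1 e2 e3 by (simp add: field_simps power2_eq_square power3_eq_cube)
qed

lemma F_deriv:
  assumes x: "x < 1"
  shows "((\<lambda>x. F j k x t) has_field_derivative ((2*j+1)/2 * F (Suc j) (Suc k) x t)) (at x)"
proof -
  have wp: "0 < w x t" using w_pos[OF x] .
  have sq: "sqrt (w x t) > 0" using wp by simp
  have dw: "((\<lambda>x. w x t) has_real_derivative - ((sin t)^2)) (at x)" unfolding w_def
    by (auto intro!: derivative_eq_intros)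
  have ds: "((\<lambda>x. sqrt (w x t)) has_real_derivative (inverse (sqrt (w x t))/2 * - ((sin t)^2))) (at x)"
    by (rule DERIV_chain2[OF DERIV_real_sqrt[OF wp] dw])
  show ?thesis
    unfolding F_def
    apply (rule ds derivative_eq_intros refl)+
    using sq apply simp
    using F_deriv_alg[OF sq] by simp
qed

lemma G_deriv:
  assumes x: "x < 1"
  shows "(G j k has_field_derivative ((2*real j+1)/2 * G (Suc j) (Suc k) x)) (at x)"
proof -
  have cont: "continuous_on ({..<1} \<times> cbox 0 (pi/2)) (\<lambda>(x, t). (2*real j+1)/2 * F (Suc j) (Suc k) x t)"
  proof -
    have "continuous_on ({..<1} \<times> cbox 0 (pi/2)) (\<lambda>z. (2*real j+1)/2 * F (Suc j) (Suc k) (fst z) (snd z))"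
      by (intro continuous_intros continuous_on_subset[OF F_cont2]) auto
    then show ?thesis by (simp add: case_prod_beta')
  qed
  have "((\<lambda>x. integral (cbox 0 (pi/2)) (F j k x)) has_field_derivative
     integral (cbox 0 (pi/2)) (\<lambda>t. (2*real j+1)/2 * F (Suc j) (Suc k) x t)) (at x within {..<1})"
    apply (rule leibniz_rule_field_derivative)
    using F_deriv has_field_derivative_at_within apply blast
    using F_cont integrable_continuous apply blast
    using cont apply simp
    using x apply simp
    by simp
  then have "((\<lambda>x. integral {0..pi/2} (F j k x)) has_field_derivative
     integral {0..pi/2} (\<lambda>t. (2*real j+1)/2 * F (Suc j) (Suc k) x t)) (at x)"
    using at_within_open[of x "{..<1}"] x by simp
  then show ?thesis unfolding G_def by simp
qed




lemma ftc0:
  assumes "\<And>t. t \<in> {0..pi/2} \<Longrightarrow> (g has_real_derivative N t) (at t)" "g 0 = 0" "g (pi/2) = 0"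
  shows "(N has_integral 0) {0..pi/2}"
proof -
  have "(N has_integral (g (pi/2) - g 0)) {0..pi/2}"
    apply (rule fundamental_theorem_of_calculus)
    using assms(1) by (auto simp: has_real_derivative_iff_has_vector_derivative[symmetric]
        intro: has_field_derivative_at_within)
  then show ?thesis using assms by simp
qed

lemma rec_alg:
  fixes S C r x P N :: real
  assumes r: "r > 0" and rr: "r^2 = 1 - x * S^2" and cc: "C^2 = 1 - S^2"
  shows "((2 * N + 1) * (C * 1 * P) * C + - S * 1 * (S * P)) * r + inverse r / 2 * - (x * (2 * S * C)) * ((S * P) * C)
     = (2 * N + 1) * (P / r) - 2 * (N + 1) * (1 + x) * (S^2 * P / r) + (2 * N + 3) * x * (S^2 * (S^2 * P) / r)"
proof -
  have key: "((2 * N + 1) * C^2 * P - S^2 * P) * r^2 - x * S^2 * C^2 * P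
     = (2 * N + 1) * P - 2 * (N + 1) * (1 + x) * (S^2 * P) + (2 * N + 3) * x * (S^2 * (S^2 * P))"
    unfolding rr cc by (simp add: algebra_simps power2_eq_square)
  have e1: "((2 * N + 1) * (C * 1 * P) * C + - S * 1 * (S * P)) * r + inverse r / 2 * - (x * (2 * S * C)) * ((S * P) * C)
      = (((2 * N + 1) * C^2 * P - S^2 * P) * r^2 - x * S^2 * C^2 * P) / r"
    using r by (simp add: field_simps power2_eq_square)
  have e2: "(2 * N + 1) * (P / r) - 2 * (N + 1) * (1 + x) * (S^2 * P / r) + (2 * N + 3) * x * (S^2 * (S^2 * P) / r)
      = ((2 * N + 1) * P - 2 * (N + 1) * (1 + x) * (S^2 * P) + (2 * N + 3) * x * (S^2 * (S^2 * P))) / r"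
    using r by (simp add: field_simps)
  show ?thesis unfolding e1 e2 key ..
qed

lemma rec_deriv:
  assumes x: "x < 1"
  shows "((\<lambda>t. sin t ^ (2*n+1) * cos t * sqrt (w x t)) has_real_derivative
     ((2*n+1) * F 0 n x t - 2*(n+1)*(1+x) * F 0 (Suc n) x t + (2*n+3)*x * F 0 (Suc (Suc n)) x t)) (at t)"
proof -
  have wp: "0 < w x t" using w_pos[OF x] .
  have sq: "sqrt (w x t) > 0" using wp by simp
  have dw: "((\<lambda>t. w x t) has_real_derivative - (x * (2 * sin t * cos t))) (at t)" unfolding w_def
    by (auto intro!: derivative_eq_intros simp: power2_eq_square)
  have ds: "((\<lambda>t. sqrt (w x t)) has_real_derivative (inverse (sqrt (w x t))/2 * - (x * (2 * sin t * cos t)))) (at t)"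
    by (rule DERIV_chain2[OF DERIV_real_sqrt[OF wp] dw])
  have rr: "sqrt (w x t)^2 = 1 - x * (sin t)^2" using wp by (simp add: w_def)
  have pp: "(sin t ^ n)^2 = (sin t^2)^n" by (metis power_mult mult.commute)
  show ?thesis
    apply (rule ds derivative_eq_intros refl)+
    unfolding F_def
    using rec_alg[OF sq rr cos_squared_eq, where P="(sin t ^ 2)^n" and N="real n"]
    by (simp add: power_mult algebra_simps pp)
qed

lemma ibp1_alg:
  fixes S C r x :: real
  assumes r: "r > 0" and rr: "r^2 = 1 - x * S^2" and cc: "C^2 = 1 - S^2"
  shows "((C * 1 * C + - S * 1 * S) * r - S * C * (inverse r / 2 * - (x * (2 * S * C)))) / (r * r)
     = 1 / r^3 - 2 * (S^2 / r^3) + x * ((S^2)^2 / r^3)"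
proof -
  have key: "(C^2 - S^2) * r^2 + x * S^2 * C^2 = 1 - 2 * S^2 + x * (S^2)^2"
    unfolding rr cc by (simp add: algebra_simps power2_eq_square)
  have e1: "((C * 1 * C + - S * 1 * S) * r - S * C * (inverse r / 2 * - (x * (2 * S * C)))) / (r * r)
     = ((C^2 - S^2) * r^2 + x * S^2 * C^2) / r^3"
    using r by (simp add: field_simps power2_eq_square power3_eq_cube)
  have e2: "1 / r^3 - 2 * (S^2 / r^3) + x * ((S^2)^2 / r^3) = (1 - 2 * S^2 + x * (S^2)^2) / r^3"
    using r by (simp add: field_simps)
  show ?thesis unfolding e1 e2 key ..
qed

lemma ibp2_alg:
  fixes S C r x :: real
  assumes r: "r > 0" and rr: "r^2 = 1 - x * S^2" and cc: "C^2 = 1 - S^2"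
  shows "(((C * 1 * C + - S * 1 * S) * (1 - 4 * x / 3 * S^2 + x / 3 * (S^2)^2) +
        (0 - (0 * S^2 + 2 * (C * 1 * S) * (4 * x / 3)) + (0 * (S^2)^2 + 2 * (2 * (C * 1 * S) * S^2) * (x / 3))) * (S * C)) * r ^ 3 -
      S * C * (1 - 4 * x / 3 * S^2 + x / 3 * (S^2)^2) * (3 * (inverse r / 2 * - (x * (2 * S * C)) * r ^ 2))) /
     (r ^ 3 * r ^ 3) =
     1 / r^5 - 2*(1+x) * (S^2 / r^5) + 6*x * ((S^2)^2 / r^5) - 2*x*(1+x) * ((S^2)^3 / r^5) + x^2 * ((S^2)^4 / r^5)"
proof -
  define P where "P = 1 - 4 * x / 3 * S^2 + x / 3 * (S^2)^2"
  define A where "A = (C * 1 * C + - S * 1 * S) * (1 - 4 * x / 3 * S^2 + x / 3 * (S^2)^2) +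
        (0 - (0 * S^2 + 2 * (C * 1 * S) * (4 * x / 3)) + (0 * (S^2)^2 + 2 * (2 * (C * 1 * S) * S^2) * (x / 3))) * (S * C)"
  have A: "A = (C^2 - S^2) * P + S^2 * C^2 * (- 8 * x / 3 + 4 * x / 3 * S^2)"
    unfolding A_def P_def by (simp add: algebra_simps power2_eq_square)
  have inv: "inverse r / 2 * - (x * (2 * S * C)) * r ^ 2 = - x*S*C*r"
    using r by (simp add: field_simps power2_eq_square)
  have n: "A * r^3 - S * C * P * (3 * (- x*S*C*r)) = (A*r^2 + 3*x*S^2*C^2*P) * r"
    by (simp add: algebra_simps power2_eq_square power3_eq_cube)
  have d: "r^3 * r^3 = r^5 * r" by (simp add: power_add[symmetric] power_Suc2[symmetric])
  have e1: "(A * r^3 - S * C * P * (3 * (- x*S*C*r))) / (r ^ 3 * r ^ 3) = (A*r^2 + 3*x*S^2*C^2*P) / r^5"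
    unfolding n d using r by simp
  have key: "(A*r^2 + 3*x*S^2*C^2*P)
     = 1 - 2*(1+x) * S^2 + 6*x * (S^2)^2 - 2*x*(1+x) * (S^2)^3 + x^2 * (S^2)^4"
    unfolding A rr cc P_def by (simp add: field_simps power2_eq_square power3_eq_cube power4_eq_xxxx)
  have e2: "1 / r^5 - 2*(1+x) * (S^2 / r^5) + 6*x * ((S^2)^2 / r^5) - 2*x*(1+x) * ((S^2)^3 / r^5) + x^2 * ((S^2)^4 / r^5)
     = (1 - 2*(1+x) * S^2 + 6*x * (S^2)^2 - 2*x*(1+x) * (S^2)^3 + x^2 * (S^2)^4) / r^5"
    using r by (simp add: field_simps)
  show ?thesis using e1 unfolding e2 key[symmetric] inv unfolding A_def P_def .
qed

lemma ibp1_deriv: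
  assumes x: "x < 1"
  shows "((\<lambda>t. sin t * cos t / sqrt (w x t)) has_real_derivative
     (F 1 0 x t - 2 * F 1 1 x t + x * F 1 2 x t)) (at t)"
proof -
  have wp: "0 < w x t" using w_pos[OF x] .
  have sq: "sqrt (w x t) > 0" using wp by simp
  have dw: "((\<lambda>t. w x t) has_real_derivative - (x * (2 * sin t * cos t))) (at t)" unfolding w_def
    by (auto intro!: derivative_eq_intros simp: power2_eq_square)
  have ds: "((\<lambda>t. sqrt (w x t)) has_real_derivative (inverse (sqrt (w x t))/2 * - (x * (2 * sin t * cos t)))) (at t)"
    by (rule DERIV_chain2[OF DERIV_real_sqrt[OF wp] dw])
  have rr: "sqrt (w x t)^2 = 1 - x * (sin t)^2" using wp by (simp add: w_def)
  show ?thesis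
    apply (rule ds derivative_eq_intros refl)+
    using sq apply simp
    unfolding F_def using ibp1_alg[OF sq rr cos_squared_eq] by simp
qed

lemma ibp2_deriv:
  assumes x: "x < 1"
  shows "((\<lambda>t. sin t * cos t * (1 - 4*x/3 * sin t^2 + x/3 * (sin t^2)^2) / sqrt (w x t)^3) has_real_derivative
     (F 2 0 x t - 2*(1+x) * F 2 1 x t + 6*x * F 2 2 x t - 2*x*(1+x) * F 2 3 x t + x^2 * F 2 4 x t)) (at t)"
proof -
  have wp: "0 < w x t" using w_pos[OF x] .
  have sq: "sqrt (w x t) > 0" using wp by simp
  have dw: "((\<lambda>t. w x t) has_real_derivative - (x * (2 * sin t * cos t))) (at t)" unfolding w_def
    by (auto intro!: derivative_eq_intros simp: power2_eq_square)
  have ds: "((\<lambda>t. sqrt (w x t)) has_real_derivative (inverse (sqrt (w x t))/2 * - (x * (2 * sin t * cos t)))) (at t)"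
    by (rule DERIV_chain2[OF DERIV_real_sqrt[OF wp] dw])
  have rr: "sqrt (w x t)^2 = 1 - x * (sin t)^2" using wp by (simp add: w_def)
  show ?thesis
    apply (rule ds derivative_eq_intros refl)+
    using sq apply simp
    unfolding F_def using ibp2_alg[OF sq rr cos_squared_eq] by (simp add: numeral_eq_Suc)
qed




lemma lift:
  assumes x: "x < 1"
  shows "G j k x = G (Suc j) k x - x * G (Suc j) (Suc k) x"
proof -
  have pw: "F j k x t = F (Suc j) k x t - x * F (Suc j) (Suc k) x t" for t
  proof -
    have wp: "0 < w x t" using w_pos[OF x] .
    have sq: "sqrt (w x t) > 0" using wp by simp
    have rr: "sqrt (w x t)^2 = 1 - x * (sin t)^2" using wp by (simp add: w_def)
    have e: "sqrt (w x t) ^ (2 * Suc j + 1) = sqrt (w x t) ^ (2*j+1) * w x t"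
      using wp by (simp add: power_add[symmetric])
    have R: "sqrt (w x t) ^ (2*j+1) > 0" using sq by simp
    have ww: "w x t = 1 - x * (sin t)^2" by (simp add: w_def)
    have gen: "P / R = P / (R * W) - x * (S * P / (R * W))" if "R > 0" "W > 0" "W = 1 - x * S" for P R W S :: real
    proof -
      have "P * W + x * (S * P) = P" unfolding that(3) by (simp add: algebra_simps)
      then show ?thesis using that(1,2) by (simp add: field_simps algebra_simps)
    qed
    show ?thesis unfolding F_def e using gen[OF R wp ww] by simp
  qed
  have "((\<lambda>t. F (Suc j) k x t - x * F (Suc j) (Suc k) x t) has_integral (G (Suc j) k x - x * G (Suc j) (Suc k) x)) {0..pi/2}"
    by (intro has_integral_diff has_integral_mult_right F_has_integral x)
  moreover have "F j k x = (\<lambda>t. F (Suc j) k x t - x * F (Suc j) (Suc k) x t)" using pw by (rule ext)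
  ultimately have "(F j k x has_integral (G (Suc j) k x - x * G (Suc j) (Suc k) x)) {0..pi/2}"
    by simp
  then show ?thesis using F_has_integral[OF x] has_integral_unique by blast
qed

lemma rec:
  assumes x: "x < 1"
  shows "(2 * real n + 1) * G 0 n x - 2 * (real n + 1)*(1+x) * G 0 (Suc n) x + (2 * real n + 3)*x * G 0 (Suc (Suc n)) x = 0"
proof -
  have "((\<lambda>t. (2 * real n + 1) * F 0 n x t - 2 * (real n + 1)*(1+x) * F 0 (Suc n) x t + (2 * real n + 3)*x * F 0 (Suc (Suc n)) x t) has_integral 0) {0..pi/2}"
    by (rule ftc0[OF rec_deriv[OF x]]) auto
  moreover have "((\<lambda>t. (2 * real n + 1) * F 0 n x t - 2 * (real n + 1)*(1+x) * F 0 (Suc n) x t + (2 * real n + 3)*x * F 0 (Suc (Suc n)) x t) has_integral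
     ((2 * real n + 1) * G 0 n x - 2 * (real n + 1)*(1+x) * G 0 (Suc n) x + (2 * real n + 3)*x * G 0 (Suc (Suc n)) x)) {0..pi/2}"
    by (intro has_integral_add has_integral_diff has_integral_mult_right F_has_integral x)
  ultimately show ?thesis using has_integral_unique by blast
qed

lemma ibp1:
  assumes x: "x < 1"
  shows "G 1 0 x - 2 * G 1 1 x + x * G 1 2 x = 0"
proof -
  have "((\<lambda>t. F 1 0 x t - 2 * F 1 1 x t + x * F 1 2 x t) has_integral 0) {0..pi/2}"
    by (rule ftc0[OF ibp1_deriv[OF x]]) auto
  moreover have "((\<lambda>t. F 1 0 x t - 2 * F 1 1 x t + x * F 1 2 x t) has_integral
     (G 1 0 x - 2 * G 1 1 x + x * G 1 2 x)) {0..pi/2}"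
    by (intro has_integral_add has_integral_diff has_integral_mult_right F_has_integral x)
  ultimately show ?thesis using has_integral_unique by blast
qed

lemma ibp2:
  assumes x: "x < 1"
  shows "G 2 0 x - 2*(1+x) * G 2 1 x + 6*x * G 2 2 x - 2*x*(1+x) * G 2 3 x + x^2 * G 2 4 x = 0"
proof -
  have "((\<lambda>t. F 2 0 x t - 2*(1+x) * F 2 1 x t + 6*x * F 2 2 x t - 2*x*(1+x) * F 2 3 x t + x^2 * F 2 4 x t) has_integral 0) {0..pi/2}"
    by (rule ftc0[OF ibp2_deriv[OF x]]) auto
  moreover have "((\<lambda>t. F 2 0 x t - 2*(1+x) * F 2 1 x t + 6*x * F 2 2 x t - 2*x*(1+x) * F 2 3 x t + x^2 * F 2 4 x t) has_integral
     (G 2 0 x - 2*(1+x) * G 2 1 x + 6*x * G 2 2 x - 2*x*(1+x) * G 2 3 x + x^2 * G 2 4 x)) {0..pi/2}"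
    by (intro has_integral_add has_integral_diff has_integral_mult_right F_has_integral x)
  ultimately show ?thesis using has_integral_unique by blast
qed

lemma I1:
  assumes x: "x < 1"
  shows "(1 - x) * G 1 1 x = G 0 0 x - G 0 1 x"
  using lift[OF x, of 0 0] lift[OF x, of 0 1] ibp1[OF x]
  by (simp add: numeral_eq_Suc algebra_simps)

lemma I2:
  assumes x: "x < 1"
  shows "(1 - x)^2 * G 2 2 x = G 0 0 x - 2 * G 0 1 x + G 0 2 x"
proof -
  have l00: "G 0 0 x = G 1 0 x - x * G 1 1 x" using lift[OF x, of 0 0] by simp
  have l01: "G 0 1 x = G 1 1 x - x * G 1 2 x" using lift[OF x, of 0 1] by (simp add: numeral_eq_Suc)
  have l02: "G 0 2 x = G 1 2 x - x * G 1 3 x" using lift[OF x, of 0 2] by (simp add: numeral_eq_Suc)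
  have l10: "G 1 0 x = G 2 0 x - x * G 2 1 x" using lift[OF x, of 1 0] by (simp add: numeral_eq_Suc)
  have l11: "G 1 1 x = G 2 1 x - x * G 2 2 x" using lift[OF x, of 1 1] by (simp add: numeral_eq_Suc)
  have l12: "G 1 2 x = G 2 2 x - x * G 2 3 x" using lift[OF x, of 1 2] by (simp add: numeral_eq_Suc)
  have l13: "G 1 3 x = G 2 3 x - x * G 2 4 x" using lift[OF x, of 1 3] by (simp add: numeral_eq_Suc)
  have "G 0 0 x - 2 * G 0 1 x + G 0 2 x - (1 - x)^2 * G 2 2 x =
     G 2 0 x - 2*(1+x) * G 2 1 x + 6*x * G 2 2 x - 2*x*(1+x) * G 2 3 x + x^2 * G 2 4 x"
    unfolding l00 l01 l02 unfolding l10 l11 l12 l13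
    by (simp add: algebra_simps power2_eq_square)
  then show ?thesis using ibp2[OF x] by simp
qed




lemma main_alg:
  fixes x M0 M1 M2 M3 M4 :: real
  assumes x: "0 < x" "x < 1" and M0: "M0 > 0"
    and R1: "M0 - 2*(1+x)*M1 + 3*x*M2 = 0"
    and R2: "3*M1 - 4*(1+x)*M2 + 5*x*M3 = 0"
    and R3: "5*M2 - 6*(1+x)*M3 + 7*x*M4 = 0"
    and P1: "0 \<le> 1/4*M1 - 5/4*M2 + 2*M3 - M4"
    and P2: "0 \<le> 1/4*M1 - M2 + M3"
  shows "0 \<le> (8-9*x)*M0^2 + 16*(x-1)*M0*M1 + 8*x*M1^2"
proof -
  define L where "L = x*M0 + (24*x-16)*(M1 - M0/2)"
  have dec: "(8-9*x)*M0^2 + 16*(x-1)*M0*M1 + 8*x*M1^2 = 8*x*(M1 - M0/2)^2 + M0*L"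
    unfolding L_def by (simp add: algebra_simps power2_eq_square)
  have L: "L \<ge> 0"
  proof (cases "x \<le> 2/3")
    case True
    define \<alpha> where "\<alpha> = 8/35 - 11*x/35 + 47*x^2/420"
    define \<beta> where "\<beta> = -16/35 + 24*x/35 - 59*x^2/210 + 11*x^3/420"
    have id1: "x^3 * (1/4*M1 - 5/4*M2 + 2*M3 - M4) = \<alpha>*M0 + \<beta>*M1"
      unfolding \<alpha>_def \<beta>_def using R1 R2 R3 by algebra
    have h: "\<alpha>*M0 + \<beta>*M1 \<ge> 0" unfolding id1[symmetric] using P1 x by simp
    have b1: "x^3 \<le> x^2" using x by (simp add: power_decreasing)
    have b2: "(1-x)*(181 - 107*x) \<ge> 0" using x by (intro mult_nonneg_nonneg) auto
    have b3: "181 - 288*x + 107*x^2 \<ge> 0" using b2 by (simp add: algebra_simps power2_eq_square)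
    have \<beta>neg: "\<beta> < 0" unfolding \<beta>_def using b1 b3 x by linarith
    define Px where "Px = - (x^2 * (192 - 258*x + 121*x^2) / 420)"
    have q: "192 - 258*x + 121*x^2 > 0"
    proof -
      have "121*(x - 129/121)^2 \<ge> 0" by simp
      then show ?thesis by (simp add: algebra_simps power2_eq_square)
    qed
    have Pneg: "Px \<le> 0" unfolding Px_def using q by simp
    have eq: "-\<beta>*L = (16-24*x)*(\<alpha>*M0 + \<beta>*M1) - Px*M0"
      unfolding L_def Px_def \<alpha>_def \<beta>_def by algebra
    have "(16-24*x)*(\<alpha>*M0 + \<beta>*M1) \<ge> 0" using True h by (intro mult_nonneg_nonneg) auto
    moreover have "Px*M0 \<le> 0" using Pneg M0 by (simp add: mult_nonpos_nonneg)
    ultimately have "-\<beta>*L \<ge> 0" unfolding eq by linarith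
    then show ?thesis using \<beta>neg by (simp add: mult_le_0_iff)
  next
    case False
    define \<alpha> where "\<alpha> = -4/15 + x/15"
    define \<beta> where "\<beta> = 8/15 - x/5 + 7*x^2/60"
    have id2: "x^2 * (1/4*M1 - M2 + M3) = \<alpha>*M0 + \<beta>*M1"
      unfolding \<alpha>_def \<beta>_def using R1 R2 by algebra
    have h: "\<alpha>*M0 + \<beta>*M1 \<ge> 0" unfolding id2[symmetric] using P2 x by simp
    have x2: "x^2 \<le> x" using x by (simp add: power2_eq_square mult_left_le)
    have \<beta>pos: "\<beta> > 0" unfolding \<beta>_def using x x2 zero_le_power2[of x] by linarith
    have ab: "\<alpha> + 3/8*\<beta> \<le> 0" unfolding \<alpha>_def \<beta>_def using x x2 by (simp add: field_simps)
    have "\<beta>*M1 \<ge> \<beta>*(3/8*M0)"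
    proof -
      have "\<beta>*M1 \<ge> -\<alpha>*M0" using h by simp
      moreover have "-\<alpha>*M0 \<ge> (3/8*\<beta>)*M0" using ab M0 by (intro mult_right_mono) auto
      ultimately show ?thesis by simp
    qed
    then have M1: "M1 \<ge> 3/8*M0" using \<beta>pos by simp
    have "(24*x-16)*(M1 - M0/2) \<ge> (24*x-16)*(-M0/8)"
      using False M1 by (intro mult_left_mono) auto
    moreover have "x*M0 \<le> M0" using x M0 by simp
    ultimately show ?thesis unfolding L_def by (simp add: algebra_simps)
  qed
  have "8*x*(M1 - M0/2)^2 \<ge> 0" using x by simp
  moreover have "M0*L \<ge> 0" using M0 L by simp
  ultimately show ?thesis unfolding dec by linarith
qed




lemma poly_nonneg:
  fixes c0 c1 c2 c3 c4 x :: real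
  assumes x: "x < 1"
    and pos: "\<And>y::real. 0 \<le> y \<Longrightarrow> y \<le> 1 \<Longrightarrow> 0 \<le> c0 + c1*y + c2*y^2 + c3*y^3 + c4*y^4"
  shows "0 \<le> c0 * G 0 0 x + c1 * G 0 1 x + c2 * G 0 2 x + c3 * G 0 3 x + c4 * G 0 4 x"
proof -
  have hi: "((\<lambda>t. c0 * F 0 0 x t + c1 * F 0 1 x t + c2 * F 0 2 x t + c3 * F 0 3 x t + c4 * F 0 4 x t) has_integral
      (c0 * G 0 0 x + c1 * G 0 1 x + c2 * G 0 2 x + c3 * G 0 3 x + c4 * G 0 4 x)) {0..pi/2}"
    by (intro has_integral_add has_integral_mult_right F_has_integral x)
  show ?thesis
  proof (rule has_integral_nonneg[OF hi])
    fix t :: real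
    have wp: "0 < w x t" using w_pos[OF x] .
    have s: "0 \<le> (sin t)^2" "(sin t)^2 \<le> 1" by (auto simp: abs_square_le_1)
    have "c0 * F 0 0 x t + c1 * F 0 1 x t + c2 * F 0 2 x t + c3 * F 0 3 x t + c4 * F 0 4 x t
       = (c0 + c1*(sin t)^2 + c2*((sin t)^2)^2 + c3*((sin t)^2)^3 + c4*((sin t)^2)^4) / sqrt (w x t)"
      unfolding F_def by (simp add: add_divide_distrib)
    moreover have "0 \<le> (c0 + c1*(sin t)^2 + c2*((sin t)^2)^2 + c3*((sin t)^2)^3 + c4*((sin t)^2)^4) / sqrt (w x t)"
      using pos[OF s] wp by simp
    ultimately show "0 \<le> c0 * F 0 0 x t + c1 * F 0 1 x t + c2 * F 0 2 x t + c3 * F 0 3 x t + c4 * F 0 4 x t"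
      by simp
  qed
qed

lemma G00_ge:
  assumes x: "0 \<le> x" "x < 1"
  shows "G 0 0 x \<ge> pi/2"
proof -
  have "((\<lambda>t. 1) has_integral (pi/2)) {0..pi/2::real}"
    using has_integral_const_real[of "1::real" 0 "pi/2"] by simp
  then show ?thesis
  proof (rule has_integral_le[OF _ F_has_integral[OF x(2)]])
    fix t :: real
    have wp: "0 < w x t" using w_pos[OF x(2)] .
    have "w x t \<le> 1" using x by (simp add: w_def)
    then have "sqrt (w x t) \<le> 1" by simp
    then show "1 \<le> F 0 0 x t" unfolding F_def using wp by simp
  qed
qed

lemma Phi_bounds:
  assumes x: "0 < x" "x < 1"
  shows "(1-x)^2 * (3/4 * G 0 0 x * G 2 2 x - 1/4 * (G 1 1 x)^2) \<le> 7/32 * (G 0 0 x)^2"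
    and "(1-x)^2 * (3/4 * G 0 0 x * G 2 2 x - 1/4 * (G 1 1 x)^2) \<ge> 0"
proof -
  define M0 where "M0 = G 0 0 x"
  define M1 where "M1 = G 0 1 x"
  define M2 where "M2 = G 0 2 x"
  define M3 where "M3 = G 0 3 x"
  define M4 where "M4 = G 0 4 x"
  have x1: "x < 1" using x by simp
  have M0: "M0 > 0" using G00_ge[of x] x pi_gt_zero unfolding M0_def by linarith
  have R1: "M0 - 2*(1+x)*M1 + 3*x*M2 = 0" using rec[OF x1, of 0] unfolding M0_def M1_def M2_def
    by (simp add: numeral_eq_Suc)
  have R2: "3*M1 - 4*(1+x)*M2 + 5*x*M3 = 0" using rec[OF x1, of 1] unfolding M3_def M1_def M2_def
    by (simp add: numeral_eq_Suc)
  have R3: "5*M2 - 6*(1+x)*M3 + 7*x*M4 = 0" using rec[OF x1, of 2] unfolding M3_def M4_def M2_def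
    by (simp add: numeral_eq_Suc)
  have P1: "0 \<le> 1/4*M1 - 5/4*M2 + 2*M3 - M4"
  proof -
    have "0 \<le> 0 * G 0 0 x + (1/4) * G 0 1 x + (-5/4) * G 0 2 x + 2 * G 0 3 x + (-1) * G 0 4 x"
    proof (rule poly_nonneg[OF x1])
      fix y :: real assume s: "0 \<le> y" "y \<le> 1"
      have "0 \<le> y * (1 - y) * (y - 1/2)^2" using s by simp
      also have "\<dots> = 0 + (1/4)*y + (-5/4)*y^2 + 2*y^3 + (-1)*y^4"
        by (simp add: field_simps power2_eq_square power3_eq_cube power4_eq_xxxx)
      finally show "0 \<le> 0 + (1/4)*y + (-5/4)*y^2 + 2*y^3 + (-1)*y^4" .
    qed
    then show ?thesis unfolding M1_def M2_def M3_def M4_def by simp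
  qed
  have P2: "0 \<le> 1/4*M1 - M2 + M3"
  proof -
    have "0 \<le> 0 * G 0 0 x + (1/4) * G 0 1 x + (-1) * G 0 2 x + 1 * G 0 3 x + 0 * G 0 4 x"
    proof (rule poly_nonneg[OF x1])
      fix y :: real assume s: "0 \<le> y" "y \<le> 1"
      have "0 \<le> y * (y - 1/2)^2" using s by simp
      also have "\<dots> = 0 + (1/4)*y + (-1)*y^2 + 1*y^3 + 0*y^4"
        by (simp add: field_simps power2_eq_square power3_eq_cube)
      finally show "0 \<le> 0 + (1/4)*y + (-1)*y^2 + 1*y^3 + 0*y^4" .
    qed
    then show ?thesis unfolding M1_def M2_def M3_def by simp
  qed
  have CS: "M1^2 \<le> M0 * M2"
  proof -
    define \<mu> where "\<mu> = M1 / M0"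
    have "0 \<le> \<mu>^2 * G 0 0 x + (-2*\<mu>) * G 0 1 x + 1 * G 0 2 x + 0 * G 0 3 x + 0 * G 0 4 x"
    proof (rule poly_nonneg[OF x1])
      fix y :: real
      have "0 \<le> (\<mu> - y)^2" by simp
      also have "\<dots> = \<mu>^2 + (-2*\<mu>)*y + 1*y^2 + 0*y^3 + 0*y^4" by (simp add: field_simps power2_eq_square)
      finally show "0 \<le> \<mu>^2 + (-2*\<mu>)*y + 1*y^2 + 0*y^3 + 0*y^4" .
    qed
    then have "0 \<le> \<mu>^2 * M0 - 2*\<mu>*M1 + M2" unfolding M0_def M1_def M2_def by simp
    also have "\<mu>^2 * M0 - 2*\<mu>*M1 + M2 = M2 - M1^2/M0" unfolding \<mu>_def using M0
      by (simp add: field_simps power2_eq_square)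
    finally have "M1^2/M0 \<le> M2" by simp
    then show ?thesis using M0 by (simp add: field_simps)
  qed
  have E: "(1-x)^2 * (3/4 * G 0 0 x * G 2 2 x - 1/4 * (G 1 1 x)^2)
      = 3/4 * M0 * (M0 - 2*M1 + M2) - 1/4 * (M0 - M1)^2"
  proof -
    have "(1-x)^2 * (3/4 * G 0 0 x * G 2 2 x - 1/4 * (G 1 1 x)^2)
       = 3/4 * G 0 0 x * ((1-x)^2 * G 2 2 x) - 1/4 * ((1-x) * G 1 1 x)^2"
      by (simp add: field_simps power2_eq_square)
    then show ?thesis unfolding I1[OF x1] I2[OF x1] M0_def M1_def M2_def .
  qed
  have key: "0 \<le> (8-9*x)*M0^2 + 16*(x-1)*M0*M1 + 8*x*M1^2"
    by (rule main_alg[OF x M0 R1 R2 R3 P1 P2])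
  have "32*x*(7/32 * M0^2 - (3/4 * M0 * (M0 - 2*M1 + M2) - 1/4 * (M0 - M1)^2))
      = (8-9*x)*M0^2 + 16*(x-1)*M0*M1 + 8*x*M1^2"
  proof -
    have "3*x*M2 = 2*(1+x)*M1 - M0" using R1 by simp
    have "32*x*(7/32 * M0^2 - (3/4 * M0 * (M0 - 2*M1 + M2) - 1/4 * (M0 - M1)^2))
       = 7*x*M0^2 - 24*x*M0^2 + 48*x*M0*M1 - 8*M0*(3*x*M2) + 8*x*(M0-M1)^2"
      by (simp add: field_simps power2_eq_square)
    also have "\<dots> = (8-9*x)*M0^2 + 16*(x-1)*M0*M1 + 8*x*M1^2"
      unfolding \<open>3*x*M2 = 2*(1+x)*M1 - M0\<close> by (simp add: field_simps power2_eq_square)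
    finally show ?thesis .
  qed
  then have "0 \<le> 32*x*(7/32 * M0^2 - (3/4 * M0 * (M0 - 2*M1 + M2) - 1/4 * (M0 - M1)^2))"
    using key by simp
  then have "0 \<le> 7/32 * M0^2 - (3/4 * M0 * (M0 - 2*M1 + M2) - 1/4 * (M0 - M1)^2)"
    using x by (simp add: zero_le_mult_iff)
  then show "(1-x)^2 * (3/4 * G 0 0 x * G 2 2 x - 1/4 * (G 1 1 x)^2) \<le> 7/32 * (G 0 0 x)^2"
    using E unfolding M0_def by linarith
  have "M0 * (M0 - 2*M1 + M2) - (M0 - M1)^2 = M0*M2 - M1^2" by (simp add: field_simps power2_eq_square)
  then have "M0 * (M0 - 2*M1 + M2) \<ge> (M0 - M1)^2" using CS by simp
  then show "(1-x)^2 * (3/4 * G 0 0 x * G 2 2 x - 1/4 * (G 1 1 x)^2) \<ge> 0"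
    unfolding E using zero_le_power2[of "M0 - M1"] by linarith
qed




definition Phi :: "real \<Rightarrow> real" where
  "Phi x = (1-x)^2 * (3/4 * G 0 0 x * G 2 2 x - 1/4 * (G 1 1 x)^2) / (G 0 0 x)^2"

lemma G_at0: "G j k 0 = G 0 k 0"
  unfolding G_def F_def w_def by simp

lemma G_isCont: "x < 1 \<Longrightarrow> isCont (G j k) x"
  using G_deriv DERIV_isCont by blast

lemma Phi0: "Phi 0 = 7/32"
proof -
  have G0: "G 0 0 0 = pi/2"
  proof -
    have "F 0 0 0 = (\<lambda>t. 1)" unfolding F_def w_def by auto
    then show ?thesis unfolding G_def by simp
  qed
  have R1: "G 0 0 0 - 2 * G 0 1 0 = 0" using rec[of 0 0] by (simp add: numeral_eq_Suc)
  have R2: "3 * G 0 1 0 - 4 * G 0 2 0 = 0" using rec[of 0 1] by (simp add: numeral_eq_Suc)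
  have g1: "G 0 1 0 = pi/4" using R1 G0 by simp
  then have g1': "G 0 (Suc 0) 0 = pi/4" by simp
  have g2: "G 0 2 0 = 3*pi/16" using R2 g1 by simp
  show ?thesis unfolding Phi_def G_at0[of 2] G_at0[of 1] G0 g1 g1' g2
    by (simp add: field_simps power2_eq_square)
qed

lemma Phi_lim0: "(Phi \<longlongrightarrow> 7/32) (at_right 0)"
proof -
  have "G 0 0 0 \<ge> pi/2" using G00_ge[of 0] by simp
  then have nz: "G 0 0 0 \<noteq> 0" using pi_gt_zero by linarith
  have "isCont Phi 0" unfolding Phi_def
    by (intro continuous_intros G_isCont) (use nz in auto)
  then have "(Phi \<longlongrightarrow> Phi 0) (at 0)" by (simp add: isCont_def)
  then have "(Phi \<longlongrightarrow> Phi 0) (at_right 0)"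
    by (rule tendsto_mono[OF at_le, rotated]) auto
  then show ?thesis using Phi0 by simp
qed

lemma exists_Phi_gt:
  assumes "p < 7/32"
  shows "\<exists>x\<in>{0<..<1}. Phi x > p"
proof -
  have "\<forall>\<^sub>F x in at_right 0. Phi x > p"
    using order_tendstoD(1)[OF Phi_lim0 assms] .
  moreover have "\<forall>\<^sub>F x in at_right (0::real). x \<in> {0<..<1}"
    using eventually_at_right_real[of 0 1] by simp
  ultimately have "\<forall>\<^sub>F x in at_right (0::real). Phi x > p \<and> x \<in> {0<..<1}"
    by (rule eventually_conj)
  then obtain x where "Phi x > p \<and> x \<in> {0<..<1}"
    using eventually_happens[of _ "at_right (0::real)"] by (auto simp: trivial_limit_at_right_real)
  then show ?thesis by auto
qed




lemma A2_le:
  assumes x: "0 \<le> x" "x < 1"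
  shows "G 0 0 x - 2 * G 0 1 x + G 0 2 x \<le> pi/2"
proof -
  have hi: "((\<lambda>t. F 0 0 x t - 2 * F 0 1 x t + F 0 2 x t) has_integral (G 0 0 x - 2 * G 0 1 x + G 0 2 x)) {0..pi/2}"
    by (intro has_integral_add has_integral_diff has_integral_mult_right F_has_integral x)
  have "((\<lambda>t. 1) has_integral (pi/2)) {0..pi/2::real}"
    using has_integral_const_real[of "1::real" 0 "pi/2"] by simp
  then show ?thesis
  proof (rule has_integral_le[OF hi])
    fix t :: real
    have wp: "0 < w x t" using w_pos[OF x(2)] .
    define s where "s = (sin t)^2"
    have s: "0 \<le> s" "s \<le> 1" unfolding s_def by (auto simp: abs_square_le_1)
    have "1 - s \<le> w x t" unfolding w_def s_def[symmetric] using x s by (simp add: mult_left_le_one_le)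
    then have "sqrt (1 - s) \<le> sqrt (w x t)" by simp
    moreover have "1 - s \<le> sqrt (1 - s)" using s by (intro real_le_rsqrt) (simp add: power2_eq_square mult_left_le_one_le)
    moreover have "(1 - s)^2 \<le> 1 - s" using s by (simp add: power2_eq_square mult_left_le_one_le)
    ultimately have le: "(1 - s)^2 \<le> sqrt (w x t)" by linarith
    have "F 0 0 x t - 2 * F 0 1 x t + F 0 2 x t = (1 - s)^2 / sqrt (w x t)"
      unfolding F_def s_def using wp by (simp add: field_simps power2_eq_square)
    also have "\<dots> \<le> 1" using le wp by simp
    finally show "F 0 0 x t - 2 * F 0 1 x t + F 0 2 x t \<le> 1" .
  qed
qed

lemma G00_ge_log:
  assumes x: "0 \<le> x" "x < 1"
  shows "G 0 0 x \<ge> ln (pi/2 + sqrt (1 - x)) - ln (sqrt (1 - x))"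
proof -
  define e where "e = sqrt (1 - x)"
  have e: "e > 0" unfolding e_def using x by simp
  have ee: "e^2 = 1 - x" unfolding e_def using x by simp
  have hi: "((\<lambda>t. 1 / (pi/2 - t + e)) has_integral ((- ln (pi/2 - pi/2 + e)) - (- ln (pi/2 - 0 + e)))) {0..pi/2}"
  proof (rule fundamental_theorem_of_calculus)
    show "0 \<le> pi/2" by simp
    fix t assume t: "t \<in> {0..pi/2}"
    have "((\<lambda>t. - ln (pi/2 - t + e)) has_real_derivative 1 / (pi/2 - t + e)) (at t)"
      using t e by (auto intro!: derivative_eq_intros simp: field_simps)
    then show "((\<lambda>t. - ln (pi/2 - t + e)) has_vector_derivative 1 / (pi/2 - t + e)) (at t within {0..pi/2})"
      by (simp add: has_real_derivative_iff_has_vector_derivative[symmetric] has_field_derivative_at_within)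
  qed
  have "ln (pi/2 + e) - ln e \<le> G 0 0 x"
  proof (rule has_integral_le[OF _ F_has_integral[OF x(2)]])
    show "((\<lambda>t. 1 / (pi/2 - t + e)) has_integral ln (pi/2 + e) - ln e) {0..pi/2}" using hi by simp
    fix t :: real assume t: "t \<in> {0..pi/2}"
    have wp: "0 < w x t" using w_pos[OF x(2)] .
    have c0: "0 \<le> cos t" using t by (intro cos_ge_zero) auto
    have c1: "cos t \<le> pi/2 - t"
    proof -
      have "cos t = sin (pi/2 - t)" by (simp add: cos_sin_eq)
      also have "\<dots> \<le> pi/2 - t" using t by (intro sin_x_le_x) auto
      finally show ?thesis .
    qed
    have "w x t = (cos t)^2 + (1 - x) * (sin t)^2" unfolding w_def using sin_cos_squared_add[of t]
      by (simp add: algebra_simps)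
    also have "\<dots> \<le> (cos t)^2 + e^2" unfolding ee using x by (simp add: mult_left_le_one_le abs_square_le_1)
    also have "\<dots> \<le> (cos t + e)^2" using c0 e by (simp add: power2_eq_square algebra_simps)
    finally have "sqrt (w x t) \<le> cos t + e" using c0 e
      by (metis real_sqrt_abs real_sqrt_le_mono abs_of_nonneg add_nonneg_nonneg less_imp_le)
    then have "sqrt (w x t) \<le> pi/2 - t + e" using c1 by linarith
    moreover have "sqrt (w x t) > 0" using wp by simp
    ultimately show "1 / (pi/2 - t + e) \<le> F 0 0 x t" unfolding F_def
      by (simp add: frac_le)
  qed
  then show ?thesis unfolding e_def .
qed

lemma exists_Phi_lt:
  assumes p: "p > 0"
  shows "\<exists>x\<in>{0<..<1}. Phi x < p"
proof -
  define N where "N = 3*pi/(8*p) + 1"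
  have "3*pi/(8*p) > 0" using p by simp
  then have N: "N > 3*pi/(8*p)" "N > 0" unfolding N_def by auto
  define e where "e = exp (- N)"
  have e: "0 < e" "e < 1" unfolding e_def using N by auto
  define x where "x = 1 - e^2"
  have "e * e < e * 1" using e by (intro mult_strict_left_mono) auto
  then have "e * e < 1" using e by linarith
  then have x: "0 < x" "x < 1" unfolding x_def using e by (auto simp: power2_eq_square)
  have sx: "sqrt (1 - x) = e" unfolding x_def using e by simp
  have "ln (pi/2 + e) \<ge> 0" using e pi_gt3 by (intro ln_ge_zero) auto
  moreover have "ln e = - N" unfolding e_def by simp
  ultimately have GN: "G 0 0 x \<ge> N" using G00_ge_log[of x] x unfolding sx by linarith
  then have G0: "G 0 0 x > 0" using N by linarith
  have num: "(1-x)^2 * (3/4 * G 0 0 x * G 2 2 x - 1/4 * (G 1 1 x)^2) \<le> 3/4 * G 0 0 x * (pi/2)"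
  proof -
    have "(1-x)^2 * (3/4 * G 0 0 x * G 2 2 x - 1/4 * (G 1 1 x)^2)
        = 3/4 * G 0 0 x * ((1-x)^2 * G 2 2 x) - 1/4 * ((1-x) * G 1 1 x)^2"
      by (simp add: field_simps power2_eq_square)
    also have "\<dots> \<le> 3/4 * G 0 0 x * ((1-x)^2 * G 2 2 x)" by simp
    also have "\<dots> \<le> 3/4 * G 0 0 x * (pi/2)"
      unfolding I2[OF x(2)] using A2_le[of x] x G0 by (intro mult_left_mono) auto
    finally show ?thesis .
  qed
  have "Phi x \<le> (3/4 * G 0 0 x * (pi/2)) / (G 0 0 x)^2"
    unfolding Phi_def using num G0 by (intro divide_right_mono) auto
  also have "\<dots> = (3*pi/8) / G 0 0 x" using G0 by (simp add: field_simps power2_eq_square)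
  also have "\<dots> \<le> (3*pi/8) / N" using GN N by (intro divide_left_mono) auto
  also have "\<dots> < p" using N p by (simp add: field_simps)
  finally show ?thesis using x by auto
qed




lemma K_eq: "0 \<le> x \<Longrightarrow> K x = G 0 0 x"
  unfolding K_def ellK_def G_def F_def w_def by simp

lemma G0pos: "x \<in> {0<..<1} \<Longrightarrow> G 0 0 x > 0"
proof -
  assume x: "x \<in> {0<..<1}"
  have "G 0 0 x \<ge> pi/2" using G00_ge[of x] x by auto
  then show ?thesis using pi_gt_zero by linarith
qed

lemma h_pos: "x \<in> {0<..<1} \<Longrightarrow> h p x > 0"
  unfolding h_def using K_eq[of x] G0pos[of x] by auto

lemma ln_h: "x \<in> {0<..<1} \<Longrightarrow> ln (h p x) = p * ln (1 - x) + ln (G 0 0 x)"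
proof -
  assume x: "x \<in> {0<..<1}"
  have "G 0 0 x > 0" using G0pos[of x] x by auto
  then show ?thesis unfolding h_def using K_eq[of x] x by (simp add: ln_mult ln_powr)
qed

lemma derivs:
  assumes x: "x \<in> {0<..<1}"
  shows "((\<lambda>x. ln (h p x)) has_real_derivative (- p / (1 - x) + (1/2 * G 1 1 x) / G 0 0 x)) (at x)"
    and "((\<lambda>x. - p / (1 - x) + (1/2 * G 1 1 x) / G 0 0 x) has_real_derivative
          ((Phi x - p) / (1 - x)^2)) (at x)"
proof -
  have x1: "x < 1" using x by simp
  have G0: "G 0 0 x > 0" using G0pos[of x] x by auto
  have dG0: "(G 0 0 has_real_derivative (1/2 * G 1 1 x)) (at x)" using G_deriv[OF x1, of 0 0] by simp
  have dG1: "(G 1 1 has_real_derivative (3/2 * G 2 2 x)) (at x)" using G_deriv[OF x1, of 1 1] by (simp add: numeral_eq_Suc)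
  have "((\<lambda>x. p * ln (1 - x) + ln (G 0 0 x)) has_real_derivative (- p / (1 - x) + (1/2 * G 1 1 x) / G 0 0 x)) (at x)"
  proof -
    have d1: "((\<lambda>x. ln (1 - x)) has_real_derivative (inverse (1 - x) * (- 1))) (at x)"
      by (rule DERIV_chain2[OF DERIV_ln]) (use x in \<open>auto intro!: derivative_eq_intros\<close>)
    have d2: "((\<lambda>x. ln (G 0 0 x)) has_real_derivative (inverse (G 0 0 x) * (1/2 * G 1 1 x))) (at x)"
      by (rule DERIV_chain2[OF DERIV_ln[OF G0] dG0])
    have "((\<lambda>x. p * ln (1 - x) + ln (G 0 0 x)) has_real_derivative
        (p * (inverse (1 - x) * (- 1)) + inverse (G 0 0 x) * (1/2 * G 1 1 x))) (at x)"
      by (intro DERIV_add DERIV_cmult d1 d2)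
    moreover have "p * (inverse (1 - x) * (- 1)) + inverse (G 0 0 x) * (1/2 * G 1 1 x)
        = - p / (1 - x) + (1/2 * G 1 1 x) / G 0 0 x" by (simp add: field_simps)
    ultimately show ?thesis by simp
  qed
  then show "((\<lambda>x. ln (h p x)) has_real_derivative (- p / (1 - x) + (1/2 * G 1 1 x) / G 0 0 x)) (at x)"
    by (rule has_field_derivative_transform_within_open[of _ _ _ "{0<..<1}"]) (use x ln_h in auto)
  show "((\<lambda>x. - p / (1 - x) + (1/2 * G 1 1 x) / G 0 0 x) has_real_derivative
          ((Phi x - p) / (1 - x)^2)) (at x)"
  proof -
    have x0: "1 - x \<noteq> 0" using x by simp
    have e1: "((\<lambda>x. - p / (1 - x)) has_real_derivative (- p / (1 - x)^2)) (at x)"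
      using x0 by (auto intro!: derivative_eq_intros simp: field_simps power2_eq_square)
    have e2: "((\<lambda>x. (1/2 * G 1 1 x) / G 0 0 x) has_real_derivative
        ((1/2 * (3/2 * G 2 2 x)) * G 0 0 x - (1/2 * G 1 1 x) * (1/2 * G 1 1 x)) / (G 0 0 x * G 0 0 x)) (at x)"
      by (rule DERIV_divide[OF DERIV_cmult[OF dG1] dG0]) (use G0 in simp)
    have "((\<lambda>x. - p / (1 - x) + (1/2 * G 1 1 x) / G 0 0 x) has_real_derivative
       (- p / (1 - x)^2 + ((1/2 * (3/2 * G 2 2 x)) * G 0 0 x - (1/2 * G 1 1 x) * (1/2 * G 1 1 x)) / (G 0 0 x * G 0 0 x))) (at x)"
      by (rule DERIV_add[OF e1 e2])
    moreover have "- p / (1 - x)^2 + ((1/2 * (3/2 * G 2 2 x)) * G 0 0 x - (1/2 * G 1 1 x) * (1/2 * G 1 1 x)) / (G 0 0 x * G 0 0 x)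
       = (Phi x - p) / (1 - x)^2"
    proof -
      have gen: "- p / a^2 + ((1/2 * (3/2 * c)) * g - (1/2 * b) * (1/2 * b)) / (g * g)
          = (a^2 * (3/4 * g * c - 1/4 * b^2) / g^2 - p) / a^2" if "a \<noteq> 0" "g \<noteq> 0" for a b c g :: real
        using that by (simp add: field_simps power2_eq_square)
      show ?thesis unfolding Phi_def using gen[OF x0, of "G 0 0 x" "G 2 2 x" "G 1 1 x"] G0 by simp
    qed
    ultimately show ?thesis by simp
  qed
qed

theorem theorem3:
  fixes p :: real
  shows "(log_concave_on {0<..<1} (h p) \<longleftrightarrow> p \<ge> 7/32) \<and>
         (log_convex_on {0<..<1} (h p) \<longleftrightarrow> p \<le> 0)"
proof
  have pos: "\<forall>x\<in>{0<..<1}. h p x > 0" using h_pos by auto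
  have cc: "concave_on {0<..<1} (\<lambda>x. ln (h p x)) \<longleftrightarrow> (\<forall>x\<in>{0<..<1}. (Phi x - p) / (1 - x)^2 \<le> 0)"
    by (rule concave_iff_f2) (rule derivs; assumption)+
  have "(\<forall>x\<in>{0<..<1}. (Phi x - p) / (1 - x)^2 \<le> 0) \<longleftrightarrow> (\<forall>x\<in>{0<..<1}. Phi x \<le> p)"
    by (auto simp: divide_le_0_iff)
  also have "\<dots> \<longleftrightarrow> p \<ge> 7/32"
  proof
    assume "\<forall>x\<in>{0<..<1}. Phi x \<le> p"
    then show "p \<ge> 7/32" using exists_Phi_gt[of p] by force
  next
    assume p: "p \<ge> 7/32"
    show "\<forall>x\<in>{0<..<1}. Phi x \<le> p"
    proof
      fix x :: real assume x: "x \<in> {0<..<1}"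
      have G0: "G 0 0 x > 0" using G0pos[of x] x by auto
      have "Phi x \<le> 7/32" unfolding Phi_def using Phi_bounds(1)[of x] x G0
        by (simp add: divide_le_eq)
      then show "Phi x \<le> p" using p by simp
    qed
  qed
  finally show "log_concave_on {0<..<1} (h p) \<longleftrightarrow> p \<ge> 7/32"
    unfolding log_concave_on_def using pos cc by simp
next
  have pos: "\<forall>x\<in>{0<..<1}. h p x > 0" using h_pos by auto
  have cv: "convex_on {0<..<1} (\<lambda>x. ln (h p x)) \<longleftrightarrow> (\<forall>x\<in>{0<..<1}. (Phi x - p) / (1 - x)^2 \<ge> 0)"
    by (rule convex_iff_f2) (rule derivs; assumption)+
  have "(\<forall>x\<in>{0<..<1}. (Phi x - p) / (1 - x)^2 \<ge> 0) \<longleftrightarrow> (\<forall>x\<in>{0<..<1}. Phi x \<ge> p)"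
    by (auto simp: zero_le_divide_iff)
  also have "\<dots> \<longleftrightarrow> p \<le> 0"
  proof
    assume a: "\<forall>x\<in>{0<..<1}. Phi x \<ge> p"
    show "p \<le> 0"
    proof (rule ccontr)
      assume "\<not> p \<le> 0"
      then obtain x where "x \<in> {0<..<1}" "Phi x < p" using exists_Phi_lt[of p] by auto
      then show False using a by force
    qed
  next
    assume p: "p \<le> 0"
    show "\<forall>x\<in>{0<..<1}. Phi x \<ge> p"
    proof
      fix x :: real assume x: "x \<in> {0<..<1}"
      have "Phi x \<ge> 0" unfolding Phi_def using Phi_bounds(2)[of x] x by simp
      then show "Phi x \<ge> p" using p by simp
    qed
  qed
  finally show "log_convex_on {0<..<1} (h p) \<longleftrightarrow> p \<le> 0"
    unfolding log_convex_on_def using pos cv by simp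
qed


end
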